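(* Let $n$ be a positive integer and assume hypothesis $(\star)$ for $\mathbb{R}^n$: for every family $\mathcal{F}$ of closed Lebesgue-null subsets of $\mathbb{R}^n$ with $|\mathcal{F}|<\mathfrak{c}$ and every Lebesgue-null set $N\subset\mathbb{R}^n$, one has $N\cup\bigcup\mathcal{F}\neq\mathbb{R}^n$ (e.g. under the Continuum Hypothesis). Then there exists a set $A\subset\mathbb{R}^n$ that is not Lebesgue null (hence $\dim_H A=n$) such that no subset of $A$ can be mapped onto a non-degenerate closed interval by a uniformly continuous map.
   Context: $\mathfrak{c}$ denotes the cardinality of the continuum; $\dim_H$ denotes Hausdorff dimension. *)

theory Defs
  imports "HOL-Analysis.Analysis"
begin

end

theory Submission
  imports Defs
begin
unbundle cardinal_syntax


definition cdig :: "(nat \<Rightarrow> bool) \<Rightarrow> nat \<Rightarrow> real" where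
  "cdig u n = (if u n then 2 else 0) / 3 ^ Suc n"

definition tern :: "(nat \<Rightarrow> bool) \<Rightarrow> real" where
  "tern u = (\<Sum>n. cdig u n)"

lemma geo_sums: "(\<lambda>n. 2 / 3 ^ Suc (n + k) :: real) sums (1 / 3 ^ k)"
proof -
  have "(\<lambda>n. (1/3::real)^n) sums (1 / (1 - 1/3))"
    by (rule geometric_sums) simp
  then have "(\<lambda>n. (2 / 3 ^ Suc k) * (1/3::real)^n) sums ((2 / 3 ^ Suc k) * (1 / (1 - 1/3)))"
    by (rule sums_mult)
  moreover have "\<And>n. (2 / 3 ^ Suc k) * (1/3::real)^n = 2 / 3 ^ Suc (n + k)"
    by (simp add: power_add power_one_over field_simps)
  moreover have "(2 / 3 ^ Suc k) * (1 / (1 - 1/3)) = (1 / 3 ^ k :: real)"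
    by (simp add: field_simps)
  ultimately show ?thesis by simp
qed

lemma cdig_nonneg: "0 \<le> cdig u n" by (simp add: cdig_def)
lemma cdig_le: "cdig u n \<le> 2 / 3 ^ Suc n" by (simp add: cdig_def)

lemma summable_cdig: "summable (cdig u)"
proof (rule summable_comparison_test'[OF sums_summable[OF geo_sums[of 0]], of 0])
  fix n show "norm (cdig u n) \<le> 2 / 3 ^ Suc (n + 0)"
    using cdig_nonneg[of u n] cdig_le[of u n] by simp
qed

lemma tern_bounds: "0 \<le> tern u" "tern u \<le> 1"
proof -
  show "0 \<le> tern u" unfolding tern_def by (simp add: cdig_nonneg suminf_nonneg summable_cdig)
  have "tern u \<le> (\<Sum>n. 2 / 3 ^ Suc (n + 0) :: real)"
    unfolding tern_def using cdig_le summable_cdig sums_summable[OF geo_sums[of 0]]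
    by (intro suminf_le) auto
  also have "\<dots> = 1" using sums_unique[OF geo_sums[of 0]] by simp
  finally show "tern u \<le> 1" .
qed

lemma tern_sep0:
  assumes agree: "\<And>i. i < j \<Longrightarrow> u i = u' i" and diff: "u j \<noteq> u' j"
  shows "1 / 3 ^ Suc j \<le> \<bar>tern u - tern u'\<bar>"
proof -
  define d where "d n = cdig u n - cdig u' n" for n
  have sd: "summable d" unfolding d_def by (intro summable_diff summable_cdig)
  have "tern u - tern u' = suminf d"
    unfolding tern_def d_def by (rule suminf_diff) (rule summable_cdig)+
  also have "\<dots> = (\<Sum>n. d (n + Suc j)) + (\<Sum>i<Suc j. d i)"
    by (rule suminf_split_initial_segment[OF sd])
  also have "(\<Sum>i<Suc j. d i) = d j"
    using agree by (simp add: d_def cdig_def)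
  finally have eq: "tern u - tern u' = (\<Sum>n. d (n + Suc j)) + d j" .
  have dj: "\<bar>d j\<bar> = 2 / 3 ^ Suc j" using diff by (cases "u j") (auto simp: d_def cdig_def)
  have bd: "\<bar>d n\<bar> \<le> 2 / 3 ^ Suc n" for n
    using cdig_nonneg[of u n] cdig_le[of u n] cdig_nonneg[of u' n] cdig_le[of u' n]
    by (simp add: d_def abs_le_iff)
  have gs: "summable (\<lambda>n. 2 / 3 ^ Suc (n + Suc j) :: real)"
    using geo_sums by (rule sums_summable)
  have sa: "summable (\<lambda>n. \<bar>d (n + Suc j)\<bar>)"
  proof (rule summable_comparison_test'[OF gs, of 0])
    fix n show "norm \<bar>d (n + Suc j)\<bar> \<le> 2 / 3 ^ Suc (n + Suc j)" using bd[of "n + Suc j"] by simp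
  qed
  have "\<bar>\<Sum>n. d (n + Suc j)\<bar> \<le> (\<Sum>n. \<bar>d (n + Suc j)\<bar>)"
    by (rule summable_rabs[OF sa])
  also have "\<dots> \<le> (\<Sum>n. 2 / 3 ^ Suc (n + Suc j))"
  proof (rule suminf_le[OF _ sa gs])
    fix n show "\<bar>d (n + Suc j)\<bar> \<le> 2 / 3 ^ Suc (n + Suc j)" using bd[of "n + Suc j"] by simp
  qed
  also have "\<dots> = 1 / 3 ^ Suc j" by (rule sums_unique[OF geo_sums, symmetric])
  finally have tl: "\<bar>\<Sum>n. d (n + Suc j)\<bar> \<le> 1 / 3 ^ Suc j" .
  show ?thesis using eq dj tl by (simp add: abs_if split: if_splits)
qed

lemma tern_sep:
  assumes diff: "u j \<noteq> u' j"
  shows "1 / 3 ^ Suc j \<le> \<bar>tern u - tern u'\<bar>"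
proof -
  define j0 where "j0 = (LEAST i. u i \<noteq> u' i)"
  have j0: "u j0 \<noteq> u' j0" unfolding j0_def by (rule LeastI[of _ j]) (rule diff)
  have le: "j0 \<le> j" unfolding j0_def by (rule Least_le) (rule diff)
  have ag: "\<And>i. i < j0 \<Longrightarrow> u i = u' i" unfolding j0_def using not_less_Least by blast
  have "1 / 3 ^ Suc j \<le> (1 / 3 ^ Suc j0 :: real)"
    using le by (simp add: divide_simps power_increasing)
  also have "\<dots> \<le> \<bar>tern u - tern u'\<bar>" by (rule tern_sep0[of j0 u u', OF ag j0])
  finally show ?thesis .
qed

lemma inj_tern: "inj tern"
proof (rule injI)
  fix u u' assume eq: "tern u = tern u'"
  show "u = u'"
  proof (rule ccontr)
    assume "u \<noteq> u'"
    then obtain j where "u j \<noteq> u' j" by auto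
    from tern_sep[of u j u', OF this] eq show False by (simp add: divide_simps)
  qed
qed




lemma real_lepoll_bits: "(UNIV::real set) \<lesssim> (UNIV::(nat \<Rightarrow> bool) set)"
proof -
  define q where "q = from_nat_into (\<rat> :: real set)"
  have "inj (\<lambda>x::real. (\<lambda>n. q n < x))"
  proof (rule injI)
    fix x y :: real assume eq: "(\<lambda>n. q n < x) = (\<lambda>n. q n < y)"
    show "x = y"
    proof (rule ccontr)
      assume "x \<noteq> y"
      then consider "x < y" | "y < x" by linarith
      then show False
      proof cases
        case 1
        then obtain r where r: "r \<in> \<rat>" "x < r" "r < y" using Rats_dense_in_real by blast
        then obtain n where "q n = r" unfolding q_def using from_nat_into_surj[OF countable_rat] by blast
        moreover have "q n < x \<longleftrightarrow> q n < y" using fun_cong[OF eq, of n] by simp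
        ultimately show False using r by auto
      next
        case 2
        then obtain r where r: "r \<in> \<rat>" "y < r" "r < x" using Rats_dense_in_real by blast
        then obtain n where "q n = r" unfolding q_def using from_nat_into_surj[OF countable_rat] by blast
        moreover have "q n < x \<longleftrightarrow> q n < y" using fun_cong[OF eq, of n] by simp
        ultimately show False using r by auto
      qed
    qed
  qed
  then show ?thesis unfolding lepoll_def by blast
qed

lemma bits_lepoll_real: "(UNIV::(nat \<Rightarrow> bool) set) \<lesssim> (UNIV::real set)"
  using inj_tern unfolding lepoll_def by blast

lemma ordLess_lesspoll: "|A| <o |B| \<Longrightarrow> A \<prec> B"
  unfolding lesspoll_def lepoll_def
  by (metis card_of_ordLeq eqpoll_iff_card_of_ordIso not_ordLess_ordIso ordLess_imp_ordLeq)

definition NG :: "'a::euclidean_space set set" where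
  "NG = {D. D \<in> null_sets lebesgue \<and> gdelta D}"

lemma open_basis_eq:
  fixes Bs :: "nat \<Rightarrow> 'a::euclidean_space set"
  assumes "\<And>S. open S \<Longrightarrow> \<exists>k. S = \<Union>{Bs n |n. n \<in> k}" "open S"
  shows "S = \<Union>{Bs n |n. Bs n \<subseteq> S}"
proof -
  obtain k where "S = \<Union>{Bs n |n. n \<in> k}" using assms by blast
  then show ?thesis by blast
qed

lemma NG_lepoll: "(NG :: 'a::euclidean_space set set) \<lesssim> (UNIV::(nat \<Rightarrow> bool) set)"
proof -
  obtain Bs :: "nat \<Rightarrow> 'a set" where "inj Bs" and Bo: "\<And>n. open (Bs n)"
    and Bb: "\<And>S. open S \<Longrightarrow> \<exists>k. S = \<Union>{Bs n |n. n \<in> k}"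
    by (rule univ_second_countable_sequence) iprover
  define UU where "UU D = (SOME F. (\<forall>n::nat. open (F n)) \<and> D = \<Inter>(F ` UNIV))" for D :: "'a set"
  have UU: "(\<forall>n. open (UU D n)) \<and> D = \<Inter>(UU D ` UNIV)" if "D \<in> NG" for D
  proof -
    from that have "gdelta D" by (simp add: NG_def)
    then have "\<exists>F. (\<forall>n::nat. open (F n)) \<and> D = \<Inter>(F ` UNIV)"
      by (cases rule: gdelta.cases) auto
    then show ?thesis unfolding UU_def by (rule someI_ex)
  qed
  define code where "code D = (\<lambda>m. Bs (snd (prod_decode m)) \<subseteq> UU D (fst (prod_decode m)))" for D
  have "inj_on code NG"
  proof (rule inj_onI)
    fix D D' assume D: "D \<in> NG" and D': "D' \<in> NG" and eq: "code D = code D'"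
    have "Bs i \<subseteq> UU D k \<longleftrightarrow> Bs i \<subseteq> UU D' k" for i k
    proof -
      have "code D (prod_encode (k, i)) = code D' (prod_encode (k, i))" using eq by simp
      then show ?thesis unfolding code_def by simp
    qed
    then have "UU D k = UU D' k" for k
    proof -
      assume iff: "\<And>i k. Bs i \<subseteq> UU D k \<longleftrightarrow> Bs i \<subseteq> UU D' k"
      have o1: "open (UU D k)" using UU[OF D] by blast
      have o2: "open (UU D' k)" using UU[OF D'] by blast
      have "UU D k = \<Union>{Bs n |n. Bs n \<subseteq> UU D k}"
        by (rule open_basis_eq[OF Bb o1])
      also have "\<dots> = \<Union>{Bs n |n. Bs n \<subseteq> UU D' k}" using iff by blast
      also have "\<dots> = UU D' k"
        by (rule open_basis_eq[OF Bb o2, symmetric])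
      finally show ?thesis .
    qed
    then have E: "UU D = UU D'" by (rule ext)
    have "D = \<Inter>(UU D ` UNIV)" using UU[OF D] by blast
    also have "\<dots> = \<Inter>(UU D' ` UNIV)" using E by simp
    also have "\<dots> = D'" using UU[OF D'] by blast
    finally show "D = D'" .
  qed
  then show ?thesis unfolding lepoll_def by blast
qed

lemma null_sub_NG:
  assumes "N \<in> null_sets lebesgue"
  shows "\<exists>D\<in>NG. N \<subseteq> (D :: 'a::euclidean_space set)"
proof -
  from assms have "N \<in> sets lebesgue" by auto
  then obtain C T where "gdelta C" "T \<in> null_sets lebesgue" "N \<union> T = C"
    by (rule lebesgue_set_almost_gdelta)
  then have "C \<in> NG" using assms unfolding NG_def by auto
  then show ?thesis using \<open>N \<union> T = C\<close> by blast
qed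

lemma closed_gdelta:
  fixes C :: "'a::euclidean_space set"
  assumes "closed C" shows "gdelta C"
proof -
  define F where "F n = (\<Union>x\<in>C. ball x (inverse (Suc n)))" for n :: nat
  have "C = \<Inter>(F ` UNIV)"
  proof
    show "C \<subseteq> \<Inter>(F ` UNIV)" by (auto simp: F_def)
    show "\<Inter>(F ` UNIV) \<subseteq> C"
    proof
      fix y assume y: "y \<in> \<Inter>(F ` UNIV)"
      have "y \<in> closure C"
        unfolding closure_approachable
      proof (intro allI impI)
        fix e :: real assume "e > 0"
        then obtain n where n: "inverse (real (Suc n)) < e"
          using reals_Archimedean by blast
        from y have "y \<in> F n" by auto
        then obtain x where "x \<in> C" "dist x y < inverse (Suc n)" by (auto simp: F_def)
        then show "\<exists>x\<in>C. dist x y < e" using n by (meson less_trans)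
      qed
      then show "y \<in> C" using assms by simp
    qed
  qed
  moreover have "\<And>n. open (F n)" by (auto simp: F_def)
  ultimately show ?thesis by (metis gdelta.intros)
qed




lemma construction:
  assumes star: "\<And>(F :: ('a::euclidean_space) set set) (N :: 'a set).
      (\<forall>C\<in>F. closed C \<and> C \<in> null_sets lebesgue) \<Longrightarrow>
      F \<prec> (UNIV :: real set) \<Longrightarrow>
      N \<in> null_sets lebesgue \<Longrightarrow>
      N \<union> \<Union>F \<noteq> UNIV"
  shows "\<exists>A :: 'a set. A \<notin> null_sets lebesgue \<and>
     (\<forall>C. closed C \<and> C \<in> null_sets lebesgue \<longrightarrow> A \<inter> C \<prec> (UNIV :: real set))"
proof -
  have "(NG :: 'a set set) \<lesssim> (UNIV :: real set)"
    using NG_lepoll bits_lepoll_real by (rule lepoll_trans)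
  then obtain h :: "'a set \<Rightarrow> real" where h: "inj_on h NG"
    unfolding lepoll_def by blast
  have e: "{} \<in> (NG :: 'a set set)"
    unfolding NG_def using closed_gdelta[of "{}::'a set"] by simp
  define \<phi> where "\<phi> t = (if t \<in> h ` NG then inv_into NG h t else {})" for t
  have \<phi>NG: "\<phi> t \<in> NG" for t
    unfolding \<phi>_def using e by (auto intro: inv_into_into)
  have \<phi>h: "\<phi> (h D) = D" if "D \<in> NG" for D
    unfolding \<phi>_def using that h by simp
  define r where "r = |UNIV :: real set|"
  have WO: "Well_order r" unfolding r_def by (rule card_of_Well_order)
  have FD: "Field r = UNIV" unfolding r_def by (rule Field_card_of)
  have tot: "(s, t) \<in> r \<or> (t, s) \<in> r" if "s \<noteq> t" for s t
    using WO FD that unfolding well_order_on_def linear_order_on_def total_on_def by auto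
  have uS: "underS r t \<prec> (UNIV :: real set)" for t
  proof -
    have "|underS r t| <o r"
      using card_of_underS[OF card_of_Card_order, of t UNIV] unfolding r_def Field_card_of by simp
    then show ?thesis unfolding r_def by (rule ordLess_lesspoll)
  qed
  define F where "F t = {\<phi> s | s. s \<in> underS r t \<and> closed (\<phi> s)}" for t
  have Fsmall: "F t \<prec> (UNIV :: real set)" for t
  proof -
    have "F t \<lesssim> underS r t"
      by (rule subset_image_lepoll) (auto simp: F_def)
    then show ?thesis using uS by (rule lesspoll_trans1)
  qed
  have Fmem: "\<forall>C\<in>F t. closed C \<and> C \<in> null_sets lebesgue" for t
    using \<phi>NG unfolding F_def NG_def by auto
  have ex: "\<exists>y. y \<notin> \<phi> t \<union> \<Union>(F t)" for t
  proof -
    have "\<phi> t \<in> null_sets lebesgue" using \<phi>NG[of t] unfolding NG_def by auto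
    then have "\<phi> t \<union> \<Union>(F t) \<noteq> UNIV" using star[OF Fmem[of t] Fsmall[of t]] by blast
    then show ?thesis by blast
  qed
  define x where "x t = (SOME y. y \<notin> \<phi> t \<union> \<Union>(F t))" for t
  have x: "x t \<notin> \<phi> t \<union> \<Union>(F t)" for t
    unfolding x_def using someI_ex[OF ex[of t]] .
  define A where "A = range x"
  have "A \<notin> null_sets lebesgue"
  proof
    assume "A \<in> null_sets lebesgue"
    then obtain D where D: "D \<in> NG" "A \<subseteq> D" using null_sub_NG by blast
    then have "x (h D) \<in> \<phi> (h D)" using \<phi>h[OF D(1)] unfolding A_def by auto
    then show False using x by blast
  qed
  moreover have "A \<inter> C \<prec> (UNIV :: real set)" if C: "closed C" "C \<in> null_sets lebesgue" for C
  proof -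
    have CNG: "C \<in> NG" unfolding NG_def using C closed_gdelta by blast
    define s0 where "s0 = h C"
    have \<phi>s0: "\<phi> s0 = C" unfolding s0_def by (rule \<phi>h[OF CNG])
    have sub: "A \<inter> C \<subseteq> x ` insert s0 (underS r s0)"
    proof
      fix y assume y: "y \<in> A \<inter> C"
      then obtain t where t: "y = x t" unfolding A_def by blast
      have "t \<in> insert s0 (underS r s0)"
      proof (rule ccontr)
        assume nt: "t \<notin> insert s0 (underS r s0)"
        then have "t \<noteq> s0" "(t, s0) \<notin> r" unfolding underS_def by auto
        then have "(s0, t) \<in> r" using tot by blast
        then have "s0 \<in> underS r t" using \<open>t \<noteq> s0\<close> unfolding underS_def by auto
        then have "C \<in> F t" unfolding F_def using \<phi>s0 C(1) by force
        then show False using x[of t] y t by blast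
      qed
      then show "y \<in> x ` insert s0 (underS r s0)" using t by blast
    qed
    have ins: "insert s0 (underS r s0) \<prec> (UNIV :: real set)"
    proof (cases "finite (underS r s0)")
      case True
      then show ?thesis
        by (intro finite_lesspoll_infinite) (auto simp: infinite_UNIV_char_0)
    next
      case False
      then have "insert s0 (underS r s0) \<approx> underS r s0" by (rule infinite_insert_eqpoll)
      then show ?thesis using uS by (rule eq_lesspoll_trans)
    qed
    have "A \<inter> C \<lesssim> insert s0 (underS r s0)"
      using sub by (rule subset_image_lepoll)
    then show ?thesis using ins by (rule lesspoll_trans1)
  qed
  ultimately show ?thesis by blast
qed



lemma countable_pos:
  fixes Z :: "'i \<Rightarrow> 'a::euclidean_space set"
  assumes meas: "\<And>i. Z i \<in> sets lebesgue" and sub: "\<And>i. Z i \<subseteq> S"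
    and S: "S \<in> lmeasurable" and disj: "disjoint_family Z"
  shows "countable {i. measure lebesgue (Z i) \<noteq> 0}"
proof -
  define M where "M = measure lebesgue S"
  have Zf: "Z i \<in> lmeasurable" for i using fmeasurableI2[OF S sub meas] .
  have eq: "{i. measure lebesgue (Z i) \<noteq> 0} = (\<Union>m::nat. {i. inverse (Suc m) < measure lebesgue (Z i)})"
  proof safe
    fix i assume "measure lebesgue (Z i) \<noteq> 0"
    then have "0 < measure lebesgue (Z i)" using measure_nonneg[of lebesgue "Z i"] by linarith
    then obtain m where "inverse (real (Suc m)) < measure lebesgue (Z i)"
      using reals_Archimedean by blast
    then show "i \<in> (\<Union>m. {i. inverse (real (Suc m)) < measure lebesgue (Z i)})" by blast
  next
    fix i m assume "inverse (real (Suc m)) < measure lebesgue (Z i)" "measure lebesgue (Z i) = 0"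
    then show False by (simp add: less_le_not_le)
  qed
  have fin: "finite {i. inverse (Suc m) < measure lebesgue (Z i)}" for m :: nat
  proof -
    have "finite {i. inverse (Suc m) < measure lebesgue (Z i)} \<and>
          card {i. inverse (Suc m) < measure lebesgue (Z i)} \<le> nat \<lceil>M * Suc m\<rceil>"
    proof (rule finite_if_finite_subsets_card_bdd)
      fix G assume G: "G \<subseteq> {i. inverse (Suc m) < measure lebesgue (Z i)}" "finite G"
      have "real (card G) * inverse (Suc m) = (\<Sum>i\<in>G. inverse (Suc m))" by simp
      also have "\<dots> \<le> (\<Sum>i\<in>G. measure lebesgue (Z i))"
        using G(1) by (intro sum_mono) (auto intro: less_imp_le)
      also have "\<dots> = measure lebesgue (\<Union>i\<in>G. Z i)"
      proof (rule measure_finite_Union[symmetric])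
        show "finite G" by fact
        show "Z ` G \<subseteq> sets lebesgue" using meas by auto
        show "disjoint_family_on Z G" using disj by (auto simp: disjoint_family_on_def)
        show "emeasure lebesgue (Z i) \<noteq> \<infinity>" for i using fmeasurableD2[OF Zf[of i]] by simp
      qed
      also have "\<dots> \<le> M" unfolding M_def
        using sub meas G(2) by (intro measure_mono_fmeasurable[OF _ _ S]) auto
      finally have "real (card G) * inverse (Suc m) \<le> M" .
      then have "real (card G) \<le> M * Suc m" by (simp add: field_simps)
      then show "card G \<le> nat \<lceil>M * Suc m\<rceil>" by linarith
    qed
    then show ?thesis by blast
  qed
  show ?thesis unfolding eq using fin by (intro countable_UN) (auto intro: countable_finite)
qed

lemma no_map:
  fixes A :: "'a::euclidean_space set" and f :: "'a \<Rightarrow> real"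
  assumes small: "\<And>C. closed C \<Longrightarrow> C \<in> null_sets lebesgue \<Longrightarrow> A \<inter> C \<prec> (UNIV::real set)"
    and BA: "B \<subseteq> A" and ab: "a < b" and uc: "uniformly_continuous_on B f" and img: "f ` B = {a..b}"
  shows False
proof -
  obtain g where ucg: "uniformly_continuous_on (closure B) g" and gf: "\<And>x. x \<in> B \<Longrightarrow> f x = g x"
    using uniformly_continuous_on_extension_on_closure[OF uc] by metis
  define K where "K = closure B"
  have contg: "continuous_on K g" unfolding K_def using ucg by (rule uniformly_continuous_imp_continuous)
  define e where "e u = a + (b - a) * tern u" for u
  have e_inj: "inj e"
  proof (rule injI)
    fix u u' assume "e u = e u'"
    then have "tern u = tern u'" using ab unfolding e_def by simp
    then show "u = u'" using inj_tern by (simp add: inj_eq)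
  qed
  have e_sep: "(b - a) / 3 ^ Suc j \<le> \<bar>e u - e u'\<bar>" if "u j \<noteq> u' j" for u u' j
  proof -
    have "\<bar>e u - e u'\<bar> = (b - a) * \<bar>tern u - tern u'\<bar>"
      using ab unfolding e_def by (simp add: abs_mult right_diff_distrib[symmetric])
    moreover have "(b - a) * (1 / 3 ^ Suc j) \<le> (b - a) * \<bar>tern u - tern u'\<bar>"
      using tern_sep[of u j u', OF that] ab by (intro mult_left_mono) auto
    ultimately show ?thesis by simp
  qed
  have e_in: "e u \<in> {a..b}" for u
  proof -
    have "0 \<le> (b - a) * tern u" "(b - a) * tern u \<le> (b - a) * 1"
      using tern_bounds[of u] ab by (auto intro: mult_left_mono)
    then show ?thesis unfolding e_def by simp
  qed
  define U where "U v = {u. \<forall>i. u (2 * i) = v i}" for v :: "nat \<Rightarrow> bool"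
  define Y where "Y v = closure (e ` U v)" for v
  have Yab: "Y v \<subseteq> {a..b}" for v
    unfolding Y_def by (rule closure_minimal) (use e_in in auto)
  have Ydisj: "Y v \<inter> Y w = {}" if "v \<noteq> w" for v w
  proof (rule ccontr)
    assume "Y v \<inter> Y w \<noteq> {}"
    then obtain y where y: "y \<in> Y v" "y \<in> Y w" by blast
    obtain i where i: "v i \<noteq> w i" using \<open>v \<noteq> w\<close> by blast
    define \<delta> where "\<delta> = (b - a) / 3 ^ Suc (2 * i)"
    have \<delta>: "\<delta> > 0" unfolding \<delta>_def using ab by simp
    obtain p where p: "p \<in> e ` U v" "dist p y < \<delta> / 2"
      using y(1) \<delta> unfolding Y_def closure_approachable by (meson half_gt_zero)
    obtain q where q: "q \<in> e ` U w" "dist q y < \<delta> / 2"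
      using y(2) \<delta> unfolding Y_def closure_approachable by (meson half_gt_zero)
    obtain u where u: "u \<in> U v" "p = e u" using p(1) by blast
    obtain u' where u': "u' \<in> U w" "q = e u'" using q(1) by blast
    have "u (2 * i) \<noteq> u' (2 * i)" using u(1) u'(1) i unfolding U_def by auto
    then have "\<delta> \<le> \<bar>p - q\<bar>" unfolding \<delta>_def u u' by (rule e_sep)
    moreover have "\<bar>p - q\<bar> < \<delta>" using p(2) q(2) by (simp add: dist_real_def abs_if split: if_splits)
    ultimately show False by simp
  qed
  define Cv where "Cv v = K \<inter> g -` Y v" for v
  have Cclosed: "closed (Cv v)" for v
    unfolding Cv_def Y_def K_def
    by (rule continuous_closed_preimage[OF contg[unfolded K_def]]) auto
  have Cdisj: "disjoint_family Cv"
    unfolding disjoint_family_on_def Cv_def using Ydisj by blast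
  define Zk where "Zk k v = Cv v \<inter> cball 0 (real k)" for k :: nat and v
  have Zmeas: "Zk k v \<in> sets lebesgue" for k v
  proof -
    have "closed (Zk k v)" unfolding Zk_def using Cclosed by blast
    from borel_closed[OF this] show ?thesis by simp
  qed
  have cnt: "countable {v. measure lebesgue (Zk k v) \<noteq> 0}" for k
  proof (rule countable_pos[of "Zk k" "cball 0 (real k)"])
    show "Zk k v \<in> sets lebesgue" for v by (rule Zmeas)
    show "Zk k v \<subseteq> cball 0 (real k)" for v unfolding Zk_def by blast
    show "cball (0::'a) (real k) \<in> lmeasurable" by simp
    show "disjoint_family (Zk k)" using Cdisj unfolding disjoint_family_on_def Zk_def by blast
  qed
  have unc: "uncountable (UNIV :: (nat \<Rightarrow> bool) set)"
    using real_lepoll_bits uncountable_UNIV_real countable_lepoll by blast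
  have "countable (\<Union>k. {v. measure lebesgue (Zk k v) \<noteq> 0})"
    using cnt by (intro countable_UN) auto
  then obtain v where v: "v \<notin> (\<Union>k. {v. measure lebesgue (Zk k v) \<noteq> 0})"
    using unc by (metis UNIV_I subsetI countable_subset)
  have Znull: "Zk k v \<in> null_sets lebesgue" for k
  proof -
    have "Zk k v \<in> lmeasurable"
      by (rule fmeasurableI2[OF lmeasurable_cball[of 0 "real k"]]) (auto simp: Zk_def intro: Zmeas[unfolded Zk_def])
    moreover have "measure lebesgue (Zk k v) = 0" using v by blast
    ultimately show ?thesis using Zmeas by (intro null_setsI) (simp add: emeasure_eq_measure2)
  qed
  have "Cv v = (\<Union>k. Zk k v)"
  proof
    show "Cv v \<subseteq> (\<Union>k. Zk k v)"
    proof
      fix x assume "x \<in> Cv v"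
      moreover obtain k :: nat where "norm x \<le> real k" using real_arch_simple by blast
      ultimately show "x \<in> (\<Union>k. Zk k v)" unfolding Zk_def by auto
    qed
  qed (auto simp: Zk_def)
  then have Cnull: "Cv v \<in> null_sets lebesgue" using Znull by auto
  have sm: "A \<inter> Cv v \<prec> (UNIV :: real set)" by (rule small[OF Cclosed Cnull])
  have big: "(UNIV :: real set) \<lesssim> A \<inter> Cv v"
  proof -
    define \<iota> where "\<iota> w = (\<lambda>n. if even n then v (n div 2) else w (n div 2))" for w :: "nat \<Rightarrow> bool"
    have "inj \<iota>"
    proof (rule injI)
      fix w w' assume eq: "\<iota> w = \<iota> w'"
      show "w = w'"
      proof
        fix n
        have "\<iota> w (Suc (2 * n)) = \<iota> w' (Suc (2 * n))" using eq by simp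
        then show "w n = w' n" unfolding \<iota>_def by simp
      qed
    qed
    moreover have "range \<iota> \<subseteq> U v" unfolding U_def \<iota>_def by auto
    ultimately have l1: "(UNIV :: (nat \<Rightarrow> bool) set) \<lesssim> U v" unfolding lepoll_def by blast
    have l2: "U v \<lesssim> e ` U v" unfolding lepoll_def using e_inj
      by (metis inj_on_subset subset_UNIV subset_refl)
    have l3: "e ` U v \<lesssim> A \<inter> Cv v"
    proof -
      have sub: "e ` U v \<subseteq> f ` B" using e_in img by auto
      have "inj_on (inv_into B f) (e ` U v)" using sub by (rule inj_on_inv_into)
      moreover have "inv_into B f ` (e ` U v) \<subseteq> A \<inter> Cv v"
      proof
        fix z assume "z \<in> inv_into B f ` (e ` U v)"
        then obtain y where y: "y \<in> e ` U v" "z = inv_into B f y" by blast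
        have yf: "y \<in> f ` B" using y(1) sub by blast
        have zB: "z \<in> B" unfolding y(2) using yf by (rule inv_into_into)
        have fz: "f z = y" unfolding y(2) using yf by (rule f_inv_into_f)
        have "z \<in> K" unfolding K_def using zB closure_subset by blast
        moreover have "g z \<in> Y v"
        proof -
          have "y \<in> Y v" using y(1) closure_subset[of "e ` U v"] unfolding Y_def by blast
          then show ?thesis using gf[OF zB] fz by simp
        qed
        ultimately show "z \<in> A \<inter> Cv v" using zB BA unfolding Cv_def by auto
      qed
      ultimately show ?thesis unfolding lepoll_def by blast
    qed
    show ?thesis using real_lepoll_bits l1 l2 l3 by (meson lepoll_trans)
  qed
  have "(UNIV :: real set) \<prec> (UNIV :: real set)" by (rule lesspoll_trans1[OF big sm])
  then show False by simp
qed


theorem corollary3p5: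
  assumes star: "\<And>(F :: (real ^ 'n) set set) (N :: (real ^ 'n) set).
      (\<forall>C\<in>F. closed C \<and> C \<in> null_sets lebesgue) \<Longrightarrow>
      F \<prec> (UNIV :: real set) \<Longrightarrow>
      N \<in> null_sets lebesgue \<Longrightarrow>
      N \<union> \<Union>F \<noteq> UNIV"
  shows "\<exists>A :: (real ^ 'n) set. A \<notin> null_sets lebesgue \<and>
     (\<forall>B f (a::real) b. B \<subseteq> A \<and> a < b \<and> uniformly_continuous_on B f
        \<longrightarrow> f ` B \<noteq> {a..b})"
proof -
  obtain A :: "(real ^ 'n) set" where A1: "A \<notin> null_sets lebesgue"
    and A2: "\<forall>C. closed C \<and> C \<in> null_sets lebesgue \<longrightarrow> A \<inter> C \<prec> (UNIV :: real set)"
    using construction[OF star] by blast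
  have small: "\<And>C. closed C \<Longrightarrow> C \<in> null_sets lebesgue \<Longrightarrow> A \<inter> C \<prec> (UNIV :: real set)"
    using A2 by blast
  show ?thesis
  proof (intro exI conjI allI impI)
    show "A \<notin> null_sets lebesgue" by (rule A1)
    fix B :: "(real ^ 'n) set" and f :: "real ^ 'n \<Rightarrow> real" and a b :: real
    assume H: "B \<subseteq> A \<and> a < b \<and> uniformly_continuous_on B f"
    show "f ` B \<noteq> {a..b}"
    proof
      assume img: "f ` B = {a..b}"
      have "B \<subseteq> A" "a < b" "uniformly_continuous_on B f" using H by auto
      from no_map[OF small this img] show False .
    qed
  qed
qed

end
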